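(* In a diagonal positive unital circuit, every operator $O_k(\mathbf{x}_k)$ (for every unit $k$ and every assignment $\mathbf{x}_k$) is a diagonal matrix.
   Context: A partition circuit over discrete variables $\mathbf{x}=\{x_0,\dots,x_{N-1}\}$ is a rooted binary tree whose leaves are in bijection with the variables (leaf $k$ carries $x_k$ with finite value set $\Omega(X_k)$), each internal unit $k$ having two children $k_l,k_r$; $\mathbf{x}_k$ denotes an assignment to the variables at leaves below $k$. A diagonal positive unital circuit assigns: to each leaf $k$ diagonal complex matrices $\Delta_{x_k}$, $x_k\in\Omega(X_k)$, with $\sum_{x_k}\Delta_{x_k}\Delta_{x_k}^*=\mathbb{1}$, and sets $O_k(\mathbf{x}_k)=\Delta_{x_k}\Delta_{x_k}^*$; to each internal unit $k$ (with input dimension $n$, the size of $O_{k_l}\otimes O_{k_r}$, and output dimension $m$) diagonal $n\times n$ matrices $D_{kj}$, $j=1,\dots,m$, with $\operatorname{Tr}[D_{kj}D_{kj}^*]=1$, and sets $O_k(\mathbf{x}_k)=\sum_{j=1}^m J_jD_{kj}\big(O_{k_l}(\mathbf{x}_{k_l})\otimes O_{k_r}(\mathbf{x}_{k_r})\big)D_{kj}^*J_j^*$, where $J_j$ is the $m\times n$ matrix whose $j$-th row consists of ones and all other entries are zero, and $\otimes$ is the Kronecker product. *)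

theory Defs
  imports "Jordan_Normal_Form.Matrix" "HOL.Complex"
begin

definition ctrans :: "complex mat \<Rightarrow> complex mat" where
  "ctrans A = mat (dim_col A) (dim_row A) (\<lambda>(i,j). cnj (A $$ (j,i)))"

definition kron :: "complex mat \<Rightarrow> complex mat \<Rightarrow> complex mat" where
  "kron A B = mat (dim_row A * dim_row B) (dim_col A * dim_col B)
     (\<lambda>(i,j). A $$ (i div dim_row B, j div dim_col B) * B $$ (i mod dim_row B, j mod dim_col B))"

definition mtrace :: "complex mat \<Rightarrow> complex" where
  "mtrace A = (\<Sum>i<dim_row A. A $$ (i,i))"

(* J_j (0-based j): m x n matrix whose j-th row is all ones, other entries zero *)
definition Jrow :: "nat \<Rightarrow> nat \<Rightarrow> nat \<Rightarrow> complex mat" where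
  "Jrow m n j = mat m n (\<lambda>(i,_). if i = j then 1 else 0)"

definition msum :: "nat \<Rightarrow> complex mat list \<Rightarrow> complex mat" where
  "msum n As = foldr (+) As (0\<^sub>m n n)"

(* Leaf v Ds : leaf carrying variable x_v; value set Omega(X_v) = {0..<length Ds},
               Ds ! a is the matrix Delta_a.
   Node Ds l r : internal unit with children l, r; output dimension m = length Ds,
               Ds ! j is the matrix D_{k,j+1}. *)
datatype pcircuit = Leaf nat "complex mat list" | Node "complex mat list" pcircuit pcircuit

fun leaves :: "pcircuit \<Rightarrow> (nat \<times> complex mat list) list" where
  "leaves (Leaf v Ds) = [(v, Ds)]"
| "leaves (Node Ds l r) = leaves l @ leaves r"

fun units :: "pcircuit \<Rightarrow> pcircuit set" where
  "units (Leaf v Ds) = {Leaf v Ds}"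
| "units (Node Ds l r) = insert (Node Ds l r) (units l \<union> units r)"

fun cdim :: "pcircuit \<Rightarrow> nat" where
  "cdim (Leaf v Ds) = dim_row (hd Ds)"
| "cdim (Node Ds l r) = length Ds"

definition partition_circuit :: "nat \<Rightarrow> pcircuit \<Rightarrow> bool" where
  "partition_circuit N c \<longleftrightarrow> distinct (map fst (leaves c)) \<and> set (map fst (leaves c)) = {0..<N}"

fun diag_pos_unital :: "pcircuit \<Rightarrow> bool" where
  "diag_pos_unital (Leaf v Ds) \<longleftrightarrow>
     Ds \<noteq> [] \<and>
     (\<forall>D\<in>set Ds. D \<in> carrier_mat (dim_row (hd Ds)) (dim_row (hd Ds)) \<and> diagonal_mat D) \<and>
     msum (dim_row (hd Ds)) (map (\<lambda>D. D * ctrans D) Ds) = 1\<^sub>m (dim_row (hd Ds))"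
| "diag_pos_unital (Node Ds l r) \<longleftrightarrow>
     diag_pos_unital l \<and> diag_pos_unital r \<and>
     (\<forall>D\<in>set Ds. D \<in> carrier_mat (cdim l * cdim r) (cdim l * cdim r) \<and> diagonal_mat D
                 \<and> mtrace (D * ctrans D) = 1)"

definition admissible :: "pcircuit \<Rightarrow> (nat \<Rightarrow> nat) \<Rightarrow> bool" where
  "admissible k x \<longleftrightarrow> (\<forall>(v, Ds) \<in> set (leaves k). x v < length Ds)"

fun Op :: "pcircuit \<Rightarrow> (nat \<Rightarrow> nat) \<Rightarrow> complex mat" where
  "Op (Leaf v Ds) x = (Ds ! x v) * ctrans (Ds ! x v)"
| "Op (Node Ds l r) x =
     (let m = length Ds; n = cdim l * cdim r in
      msum m (map (\<lambda>j. Jrow m n j * (Ds ! j) * kron (Op l x) (Op r x) * ctrans (Ds ! j)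
                         * ctrans (Jrow m n j)) [0..<m]))"

end

theory Submission
  imports Defs
begin

lemma msum_diag:
  assumes "\<forall>A\<in>set As. A \<in> carrier_mat n n \<and> diagonal_mat A"
  shows "msum n As \<in> carrier_mat n n \<and> diagonal_mat (msum n As)"
  using assms
proof (induction As)
  case Nil
  then show ?case by (simp add: msum_def diagonal_mat_def)
next
  case (Cons A As)
  then have c: "msum n As \<in> carrier_mat n n" "diagonal_mat (msum n As)"
    and a: "A \<in> carrier_mat n n" "diagonal_mat A" by auto
  have e: "msum n (A # As) = A + msum n As" by (simp add: msum_def)
  show ?case unfolding e using c a by (auto simp: diagonal_mat_def)
qed

lemma msum_carrier:
  "\<forall>A\<in>set As. A \<in> carrier_mat n n \<Longrightarrow> msum n As \<in> carrier_mat n n"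
  by (induction As) (auto simp: msum_def)

lemma ctrans_carrier: "A \<in> carrier_mat a b \<Longrightarrow> ctrans A \<in> carrier_mat b a"
  by (simp add: ctrans_def)

lemma leaf_diag:
  assumes "D \<in> carrier_mat d d" "diagonal_mat D"
  shows "diagonal_mat (D * ctrans D)"
  unfolding diagonal_mat_def
proof (intro allI impI)
  fix i k assume i: "i < dim_row (D * ctrans D)" and k: "k < dim_col (D * ctrans D)" and ne: "i \<noteq> k"
  have ii: "i < d" and kk: "k < d" using i k assms(1) by (auto simp: ctrans_def)
  have "(D * ctrans D) $$ (i,k) = (\<Sum>l<d. D $$ (i,l) * cnj (D $$ (k,l)))"
    using ii kk assms(1) by (simp add: ctrans_def scalar_prod_def times_mat_def atLeast0LessThan)
  also have "\<dots> = 0"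
  proof (rule sum.neutral, intro ballI)
    fix l assume "l \<in> {..<d}"
    then have l: "l < d" by auto
    show "D $$ (i,l) * cnj (D $$ (k,l)) = 0"
      using assms ii kk l ne unfolding diagonal_mat_def by (cases "l = i") auto
  qed
  finally show "(D * ctrans D) $$ (i,k) = 0" .
qed

lemma node_term_diag:
  assumes Y: "Y \<in> carrier_mat n n" and j: "j < m"
  shows "Jrow m n j * Y * ctrans (Jrow m n j) \<in> carrier_mat m m \<and>
         diagonal_mat (Jrow m n j * Y * ctrans (Jrow m n j))"
proof
  have J: "Jrow m n j \<in> carrier_mat m n" by (simp add: Jrow_def)
  show "Jrow m n j * Y * ctrans (Jrow m n j) \<in> carrier_mat m m"
    using J Y ctrans_carrier[OF J] by auto
  show "diagonal_mat (Jrow m n j * Y * ctrans (Jrow m n j))"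
    unfolding diagonal_mat_def
  proof (intro allI impI)
    fix a b assume a: "a < dim_row (Jrow m n j * Y * ctrans (Jrow m n j))"
      and b: "b < dim_col (Jrow m n j * Y * ctrans (Jrow m n j))" and ne: "a \<noteq> b"
    have aa: "a < m" and bb: "b < m" using a b J by (auto simp: ctrans_def)
    have "(Jrow m n j * Y * ctrans (Jrow m n j)) $$ (a,b) =
      (\<Sum>l<n. (Jrow m n j * Y) $$ (a,l) * cnj (Jrow m n j $$ (b,l)))"
      using aa bb J Y by (simp add: ctrans_def scalar_prod_def times_mat_def atLeast0LessThan)
    also have "\<dots> = (\<Sum>l<n. (\<Sum>t<n. Jrow m n j $$ (a,t) * Y $$ (t,l)) * cnj (Jrow m n j $$ (b,l)))"
      using aa bb J Y by (intro sum.cong refl) (simp add: scalar_prod_def times_mat_def atLeast0LessThan)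
    also have "\<dots> = 0"
      using aa bb ne by (intro sum.neutral ballI) (auto simp: Jrow_def)
    finally show "(Jrow m n j * Y * ctrans (Jrow m n j)) $$ (a,b) = 0" .
  qed
qed

lemma units_dpu: "diag_pos_unital c \<Longrightarrow> k \<in> units c \<Longrightarrow> diag_pos_unital k"
  by (induction c) auto

lemma Op_carrier:
  "diag_pos_unital k \<Longrightarrow> admissible k x \<Longrightarrow> Op k x \<in> carrier_mat (cdim k) (cdim k)"
proof (induction k)
  case (Leaf v Ds)
  have "x v < length Ds" using Leaf(2) by (simp add: admissible_def)
  then have "Ds ! x v \<in> set Ds" by simp
  then show ?case using Leaf(1) by (auto simp: ctrans_def)
next
  case (Node Ds l r)
  have "\<forall>A\<in>set (map (\<lambda>j. Jrow (length Ds) (cdim l * cdim r) j * (Ds ! j) * kron (Op l x) (Op r x) * ctrans (Ds ! j)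
                         * ctrans (Jrow (length Ds) (cdim l * cdim r) j)) [0..<length Ds]). A \<in> carrier_mat (length Ds) (length Ds)"
    by (auto simp: Jrow_def ctrans_def)
  then have "msum (length Ds) (map (\<lambda>j. Jrow (length Ds) (cdim l * cdim r) j * (Ds ! j) * kron (Op l x) (Op r x) * ctrans (Ds ! j)
                         * ctrans (Jrow (length Ds) (cdim l * cdim r) j)) [0..<length Ds]) \<in> carrier_mat (length Ds) (length Ds)"
    by (rule msum_carrier)
  then show ?case by (simp add: Let_def)
qed

lemma unit_diag:
  assumes "diag_pos_unital k" "admissible k x"
  shows "diagonal_mat (Op k x)"
proof (cases k)
  case (Leaf v Ds)
  have "x v < length Ds" using assms(2) by (simp add: Leaf admissible_def)
  then have "Ds ! x v \<in> set Ds" by simp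
  then show ?thesis using assms(1) Leaf leaf_diag by (auto simp: Let_def)
next
  case (Node Ds l r)
  let ?m = "length Ds" and ?n = "cdim l * cdim r"
  have "\<forall>A\<in>set (map (\<lambda>j. Jrow ?m ?n j * (Ds ! j) * kron (Op l x) (Op r x) * ctrans (Ds ! j)
                         * ctrans (Jrow ?m ?n j)) [0..<?m]). A \<in> carrier_mat ?m ?m \<and> diagonal_mat A"
  proof
    fix A assume "A \<in> set (map (\<lambda>j. Jrow ?m ?n j * (Ds ! j) * kron (Op l x) (Op r x) * ctrans (Ds ! j)
                         * ctrans (Jrow ?m ?n j)) [0..<?m])"
    then obtain j where j: "j < ?m" and A: "A = Jrow ?m ?n j * (Ds ! j) * kron (Op l x) (Op r x) * ctrans (Ds ! j)
                         * ctrans (Jrow ?m ?n j)" by auto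
    have "Ds ! j \<in> set Ds" using j by simp
    then have D: "Ds ! j \<in> carrier_mat ?n ?n" using assms(1) Node by auto
    have Y: "Ds ! j * kron (Op l x) (Op r x) * ctrans (Ds ! j) \<in> carrier_mat ?n ?n"
      using D ctrans_carrier[OF D] by auto
    have e: "A = Jrow ?m ?n j * (Ds ! j * kron (Op l x) (Op r x) * ctrans (Ds ! j)) * ctrans (Jrow ?m ?n j)"
    proof -
      have J: "Jrow ?m ?n j \<in> carrier_mat ?m ?n" by (simp add: Jrow_def)
      have al: "admissible l x" "admissible r x" using assms(2) Node by (auto simp: admissible_def)
      have dl: "diag_pos_unital l" "diag_pos_unital r" using assms(1) Node by auto
      have K: "kron (Op l x) (Op r x) \<in> carrier_mat ?n ?n"
        using Op_carrier[OF dl(1) al(1)] Op_carrier[OF dl(2) al(2)] by (auto simp: kron_def)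
      have C: "ctrans (Ds ! j) \<in> carrier_mat ?n ?n" using ctrans_carrier[OF D] .
      have DK: "Ds ! j * kron (Op l x) (Op r x) \<in> carrier_mat ?n ?n" using D K by auto
      show ?thesis unfolding A
        using assoc_mult_mat[OF J D K] assoc_mult_mat[OF J DK C] by simp
    qed
    show "A \<in> carrier_mat ?m ?m \<and> diagonal_mat A"
      unfolding e by (rule node_term_diag[OF Y j])
  qed
  then show ?thesis using msum_diag Node by (simp add: Let_def)
qed

theorem proposition9:
  fixes N :: nat and c :: pcircuit
  assumes "partition_circuit N c"
    and "diag_pos_unital c"
  shows "\<forall>k \<in> units c. \<forall>x. admissible k x \<longrightarrow> diagonal_mat (Op k x)"
  using assms(2) units_dpu unit_diag by blast

end
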